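(* Consider the single-input control-affine system $\dot{x} = f(x) + g(x)u$ and a Lipschitz continuous exponential CBF $h$ with relative degree $r<n$ and rates $\gamma_1,\dots,\gamma_r>0$, written in the cascading constraint coordinates as $\dot{\varphi} = A_\gamma \varphi + B\mu$, $\dot{\eta} = q_{\mathrm{cbf}}(\eta,\varphi)$. Let $x_0\in S_\varphi$. Suppose the fixed-virtual-control-input global exponential minimum phase condition holds: there exists $\mu_e\ge0$ such that $\dot\eta = q_{\mathrm{cbf}}(\eta,\Gamma\mu_e)$ has a globally exponentially stable equilibrium $\eta_e$. Then under $\mu(t)\equiv\mu_e$, the trajectory satisfies $(\varphi(t),\eta(t))\to(\Gamma\mu_e,\eta_e)$ as $t\to\infty$. Thus the system under the barrier constraint can stay bounded.
   Context: The system $\dot x = f(x)+g(x)u$ has $f,g:\mathbb{R}^n\to\mathbb{R}^n$ Lipschitz and $u\in\mathbb{R}$. For a scalar function $h$, $L_f$, $L_g$ denote Lie derivatives. $h$ has relative degree $r$ at $x$ if $L_gL_f^k h\equiv 0$ near $x$ for $k=0,\dots,r-2$ and $L_gL_f^{r-1}h(x)\neq 0$. An exponential CBF with relative degree $r$ is $h:\mathbb{R}^n\to\mathbb{R}$ with relative degree $r$ on $\mathcal{C}=\{h\ge 0\}$, $\partial h/\partial x\neq0$ on $\{h=0\}$, and $\sup_{u}[L_f^r h(x)+L_gL_f^{r-1}h(x)u+k^\top\xi(x)]\ge 0$ on $\mathcal{C}$, where $\xi=[h,L_fh,\dots,L_f^{r-1}h]^\top$ and $s^r+k_rs^{r-1}+\dots+k_1=(s+\gamma_1)\cdots(s+\gamma_r)$,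 $\gamma_i>0$. Virtual control input: $\mu(x,u)=L_f^rh+L_gL_f^{r-1}h\,u+k^\top\xi$; barrier constraint: $\mu\ge0$. Cascading constraint vector: $\varphi_1=h$, $\varphi_{i+1}=\dot\varphi_i+\gamma_i\varphi_i$; $S_\varphi=\{x:\varphi(x)\in\mathbb{R}^r_{\ge0}\}$. $A_\gamma$ is the $r\times r$ upper bidiagonal matrix with diagonal $-\gamma_1,\dots,-\gamma_r$ and superdiagonal entries $1$; $B=[0,\dots,0,1]^\top$; $\Gamma=-A_\gamma^{-1}B=[(\gamma_1\cdots\gamma_r)^{-1},(\gamma_2\cdots\gamma_r)^{-1},\dots,\gamma_r^{-1}]^\top$. The internal state $\eta\in\mathbb{R}^{n-r}$ is chosen so that $x\mapsto(\varphi,\eta)$ is a diffeomorphism and $L_g\eta_j\equiv 0$; then $\dot\varphi=A_\gamma\varphi+B\mu$, $\dot\eta=q_{\mathrm{cbf}}(\eta,\varphi)$ with $q_{\mathrm{cbf}}$ Lipschitz in $\eta$ and $\varphi$. Any signal $\mu(t)$ can be realized by a choice of $u$. *)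

theory Defs
  imports "HOL-Analysis.Analysis"
begin

text \<open>Vectors in R^r are represented as functions nat => real, only the
components 0..r-1 being meaningful; r x r matrices as nat => nat => real.
Indices are 0-based: gamma 0, ..., gamma (r-1) correspond to gamma_1..gamma_r.\<close>

definition matvec :: "nat \<Rightarrow> (nat \<Rightarrow> nat \<Rightarrow> real) \<Rightarrow> (nat \<Rightarrow> real) \<Rightarrow> nat \<Rightarrow> real" where
  "matvec r A v i = (\<Sum>j<r. A i j * v j)"

definition A_gamma :: "nat \<Rightarrow> (nat \<Rightarrow> real) \<Rightarrow> nat \<Rightarrow> nat \<Rightarrow> real" where
  "A_gamma r \<gamma> i j = (if i < r \<and> j < r then
      (if i = j then - \<gamma> i else if j = Suc i then 1 else 0) else 0)"

definition B_vec :: "nat \<Rightarrow> nat \<Rightarrow> real" where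
  "B_vec r i = (if i = r - 1 then 1 else 0)"

text \<open>Gamma = - A_gamma^{-1} B, i.e. the unique vector v (supported on 0..r-1)
  with A_gamma v + B = 0.\<close>
definition Gamma_vec :: "nat \<Rightarrow> (nat \<Rightarrow> real) \<Rightarrow> nat \<Rightarrow> real" where
  "Gamma_vec r \<gamma> = (THE v. (\<forall>i<r. matvec r (A_gamma r \<gamma>) v i + B_vec r i = 0)
                            \<and> (\<forall>i\<ge>r. v i = 0))"

definition dist_r :: "nat \<Rightarrow> (nat \<Rightarrow> real) \<Rightarrow> (nat \<Rightarrow> real) \<Rightarrow> real" where
  "dist_r r v w = sqrt (\<Sum>i<r. (v i - w i)^2)"

definition scale_r :: "real \<Rightarrow> (nat \<Rightarrow> real) \<Rightarrow> nat \<Rightarrow> real" where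
  "scale_r c v = (\<lambda>i. c * v i)"

definition lipschitz_cbf :: "nat \<Rightarrow> ('e::real_normed_vector \<Rightarrow> (nat \<Rightarrow> real) \<Rightarrow> 'e) \<Rightarrow> bool" where
  "lipschitz_cbf r q \<longleftrightarrow> (\<exists>L. \<forall>\<eta> \<eta>' \<phi> \<phi>'.
      norm (q \<eta> \<phi> - q \<eta>' \<phi>') \<le> L * (norm (\<eta> - \<eta>') + dist_r r \<phi> \<phi>'))"

definition glob_exp_stable_eq :: "('e::real_normed_vector \<Rightarrow> 'e) \<Rightarrow> 'e \<Rightarrow> bool" where
  "glob_exp_stable_eq F \<eta>e \<longleftrightarrow> F \<eta>e = 0 \<and>
     (\<exists>M k. M > 0 \<and> k > 0 \<and>
        (\<forall>\<zeta>. (\<forall>t\<ge>0. (\<zeta> has_vector_derivative F (\<zeta> t)) (at t within {0..})) \<longrightarrow>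
             (\<forall>t\<ge>0. norm (\<zeta> t - \<eta>e) \<le> M * exp (- k * t) * norm (\<zeta> 0 - \<eta>e))))"

end

theory Submission
  imports Defs
begin

lemma ftc_bound:
  fixes f :: "real \<Rightarrow> 'a::banach"
  assumes "a \<le> b"
    and "\<And>x. x \<in> {a..b} \<Longrightarrow> (f has_vector_derivative f' x) (at x within {a..b})"
    and "\<And>x. x \<in> {a..b} \<Longrightarrow> (G has_real_derivative g x) (at x within {a..b})"
    and "\<And>x. x \<in> {a..b} \<Longrightarrow> norm (f' x) \<le> g x"
  shows "norm (f b - f a) \<le> G b - G a"
proof -
  have 1: "(f' has_integral (f b - f a)) {a..b}"
    by (rule fundamental_theorem_of_calculus) (use assms in auto)
  have 2: "(g has_integral (G b - G a)) {a..b}"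
    by (rule fundamental_theorem_of_calculus) (use assms in \<open>auto simp: has_real_derivative_iff_has_vector_derivative\<close>)
  have "norm (integral {a..b} f') \<le> integral {a..b} g"
    by (rule integral_norm_bound_integral) (use 1 2 assms in auto)
  then show ?thesis using 1 2 by (simp add: integral_unique)
qed

lemma integral_deriv_ge0:
  fixes G :: "real \<Rightarrow> 'a::banach"
  assumes "continuous_on {0..} G" "u \<ge> 0"
  shows "((\<lambda>u. integral {0..u} G) has_vector_derivative G u) (at u within {0..})"
proof -
  have "((\<lambda>u. integral {0..u} G) has_vector_derivative G u) (at u within {0..u+1})"
    by (rule integral_has_vector_derivative) (use assms in \<open>auto intro: continuous_on_subset\<close>)
  moreover have "at u within {0..u+1} = at u within {0..}"
    by (rule at_within_nhd[where S="{u - 1 <..< u + 1}"]) auto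
  ultimately show ?thesis by simp
qed

lemma shift_deriv:
  fixes f :: "real \<Rightarrow> 'a::real_normed_vector"
  assumes "(f has_vector_derivative f') (at (t0+s) within {0..})" "t0 \<ge> 0"
  shows "((\<lambda>s. f (t0+s)) has_vector_derivative f') (at s within {0..})"
proof -
  have g: "((\<lambda>s. t0 + s) has_vector_derivative 1) (at s within {0..})"
    by (auto intro!: derivative_eq_intros)
  have "(f has_vector_derivative f') (at ((\<lambda>s. t0 + s) s) within (\<lambda>s. t0 + s) ` {0..})"
    by (rule has_vector_derivative_within_subset[OF assms(1)]) (use assms in auto)
  from vector_diff_chain_within[OF g this] show ?thesis by (simp add: o_def)
qed

lemma aux1: "(x::real) * y = 1 \<Longrightarrow> x * (m/2 * (y-1) + D * s) = m/2 * (1-x) + D * s * x"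
proof -
  assume xy: "x * y=1"
  have "x * (m/2 * (y-1) + D * s) = m/2 * (x * y) - m/2 * x + D * s * (x::real)"
    by (simp add: field_simps)
  also have "\<dots> = m/2 * (1-x) + D * s * x" using xy by (simp add: field_simps)
  finally show ?thesis .
qed


lemma gronwall_max:
  fixes e e' :: "real \<Rightarrow> 'a::banach"
  assumes T: "T \<ge> 0" and L: "L > 0" and D: "D \<ge> 0"
    and e0: "e 0 = 0"
    and de: "\<And>s. s \<in> {0..T} \<Longrightarrow> (e has_vector_derivative e' s) (at s within {0..T})"
    and bd: "\<And>s. s \<in> {0..T} \<Longrightarrow> norm (e' s) \<le> L * norm (e s) + D"
  shows "\<forall>s\<in>{0..T}. norm (e s) \<le> 2 * D * T * exp (2 * L * T)"
proof -
  have cont: "continuous_on {0..T} e"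
    using de continuous_on_eq_continuous_within has_vector_derivative_continuous by blast
  have cc: "continuous_on {0..T} (\<lambda>s. exp (-2 * L * s) * norm (e s))"
    by (intro continuous_intros cont)
  obtain s0 where s0: "s0 \<in> {0..T}" "\<forall>s\<in>{0..T}. exp(-2 * L * s) * norm(e s) \<le> exp(-2 * L * s0) * norm(e s0)"
    using continuous_attains_sup[OF compact_Icc _ cc] T by auto
  define m where "m = exp(-2 * L * s0) * norm(e s0)"
  have m0: "m \<ge> 0" unfolding m_def by simp
  have ebd: "norm (e s) \<le> m * exp (2 * L * s)" if "s\<in>{0..T}" for s
  proof -
    have "exp(-2 * L * s) * norm(e s) \<le> m" using s0 that m_def by auto
    then have 1: "exp(2 * L * s) * (exp(-2 * L * s) * norm(e s)) \<le> exp(2 * L * s) * m" by simp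
    have "exp(2 * L * s) * exp(-2 * L * s) = exp(2 * L * s + -2 * L * s)" by (rule exp_add[symmetric]) then have E: "exp(2 * L * s) * exp(-2 * L * s) = 1" by simp
    have "norm (e s) = exp(2 * L * s) * (exp(-2 * L * s) * norm(e s))" by (simp only: mult.assoc[symmetric] E mult_1)
    also have "\<dots> \<le> exp(2 * L * s) * m" by (rule 1)
    finally show ?thesis by (simp add: mult.commute)
  qed
  have key: "norm (e s) \<le> (m/2 * exp(2 * L * s) + D * s) - (m/2 * exp(2 * L * 0) + D * 0)" if s: "s\<in>{0..T}" for s
  proof -
    have "norm (e s - e 0) \<le> (m/2 * exp(2 * L * s) + D * s) - (m/2 * exp(2 * L * 0) + D * 0)"
    proof (rule ftc_bound[where g="\<lambda>\<tau>. L * m * exp(2 * L * \<tau>) + D"])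
      show "0 \<le> s" using s by simp
      fix x assume x: "x \<in> {0..s}"
      then have xT: "x \<in> {0..T}" using s by auto
      show "(e has_vector_derivative e' x) (at x within {0..s})"
        by (rule has_vector_derivative_within_subset[OF de[OF xT]]) (use s in auto)
      show "((\<lambda>\<tau>. m/2 * exp(2 * L * \<tau>) + D * \<tau>) has_real_derivative L * m * exp(2 * L * x) + D) (at x within {0..s})"
        by (auto intro!: derivative_eq_intros)
      have "norm (e' x) \<le> L * norm (e x) + D" using bd xT by auto
      also have "\<dots> \<le> L * (m * exp (2 * L * x)) + D" using ebd[OF xT] L by auto
      finally show "norm (e' x) \<le> L * m * exp(2 * L * x) + D" by (simp add: mult.assoc)
    qed
    then show ?thesis using e0 by simp
  qed
  have "m \<le> m/2 + D * T"
  proof -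
    have "exp(-2 * L * s0) * exp(2 * L * s0) = exp(-2 * L * s0 + 2 * L * s0)" by (rule exp_add[symmetric]) then have E0: "exp(-2 * L * s0) * exp(2 * L * s0) = 1" by simp
    have "norm (e s0) \<le> m/2 * (exp(2 * L * s0) - 1) + D * s0" using key[OF s0(1)] by (simp add: algebra_simps)
    then have "exp(-2 * L * s0) * norm (e s0) \<le> exp(-2 * L * s0) * (m/2 * (exp(2 * L * s0) - 1) + D * s0)"
      by (simp add: mult_left_mono)
    also have "\<dots> = m/2 * (1 - exp(-2 * L * s0)) + D * s0 * exp(-2 * L * s0)"
      using aux1[OF E0] by simp
    also have "\<dots> \<le> m/2 + D * T"
    proof -
      have a: "m/2 * (1 - exp(-2 * L * s0)) \<le> m/2" using m0 by (simp add: mult_left_le)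
      have "exp(-2 * L * s0) \<le> 1" using L s0 by simp
      then have b: "D * s0 * exp(-2 * L * s0) \<le> D * s0" using D s0 by (simp add: mult_left_le)
      have "D * s0 \<le> D * T" using D s0 by (simp add: mult_left_mono)
      then show ?thesis using a b by linarith
    qed
    finally show ?thesis unfolding m_def .
  qed
  then have mb: "m \<le> 2 * D * T" by simp
  show ?thesis
  proof
    fix s assume s: "s \<in> {0..T}"
    have "norm (e s) \<le> m * exp (2 * L * s)" by (rule ebd[OF s])
    also have "\<dots> \<le> (2 * D * T) * exp(2 * L * T)"
      by (rule mult_mono) (use mb s L D T in auto)
    finally show "norm (e s) \<le> 2 * D * T * exp (2 * L * T)" .
  qed
qed


lemma aux2:
  fixes X E u c nz A ny :: real
  assumes "0 < X" "X \<le> 1" "X * E = 1" "X * u * c \<le> 1" "c > 0" "nz \<ge> 0" "A \<ge> 0" "ny \<ge> 0"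
  shows "X * (nz + A * u + ny * (E - 1) / 2) \<le> nz + A / c + ny / 2"
proof -
  have e: "X * (nz + A * u + ny * (E - 1) / 2) = X * nz + A * (X * u) + ny / 2 * (X * E) - ny / 2 * X"
    by (simp add: field_simps)
  have 1: "X * nz \<le> nz" using assms by (simp add: mult_left_le_one_le)
  have "X * u \<le> 1 / c" using assms by (simp add: field_simps)
  then have 2: "A * (X * u) \<le> A / c" using assms by (metis divide_inverse mult_left_mono mult_1_right times_divide_eq_right)
  have 3: "ny / 2 * X \<ge> 0" using assms by simp
  show ?thesis unfolding e using 1 2 3 assms(3) by simp
qed

lemma ode_exists:
  fixes F :: "'a::euclidean_space \<Rightarrow> 'a"
  assumes lip: "\<And>x y. norm (F x - F y) \<le> L * norm (x - y)" and Lpos: "L > 0"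
  shows "\<exists>\<zeta>. \<zeta> 0 = z \<and> (\<forall>t\<ge>0. (\<zeta> has_vector_derivative F (\<zeta> t)) (at t within {0..}))"
proof -
  define c where "c = 2 * L"
  have cpos: "c > 0" using Lpos by (simp add: c_def)
  have Fcont: "continuous_on UNIV F"
  proof (rule lipschitz_on_continuous_on)
    show "L-lipschitz_on UNIV F" by (rule lipschitz_onI) (use lip Lpos in \<open>auto simp: dist_norm\<close>)
  qed
  define Gy where "Gy = (\<lambda>(y::real \<Rightarrow>\<^sub>C 'a) s. F (exp (c * s) *\<^sub>R apply_bcontfun y s))"
  define Iy where "Iy = (\<lambda>y u. integral {0..u} (Gy y))"
  define Ph where "Ph = (\<lambda>y t. exp (- c * max t 0) *\<^sub>R (z + Iy y (max t 0)))"
  have Gcont: "continuous_on UNIV (Gy y)" for y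
    unfolding Gy_def by (rule continuous_on_compose2[OF Fcont]) (auto intro!: continuous_intros)
  have Ider: "(Iy y has_vector_derivative Gy y u) (at u within {0..})" if "u \<ge> 0" for y u
    unfolding Iy_def by (rule integral_deriv_ge0) (use Gcont that in \<open>auto intro: continuous_on_subset\<close>)
  have Icont: "continuous_on {0..} (Iy y)" for y
  proof (rule continuous_on_eq_continuous_within[THEN iffD2], intro ballI)
    fix u :: real assume "u \<in> {0..}"
    then show "continuous (at u within {0..}) (Iy y)" using has_vector_derivative_continuous[OF Ider] by simp
  qed
  have I0: "Iy y 0 = 0" for y by (simp add: Iy_def)
  have Phcont: "continuous_on UNIV (Ph y)" for y
  proof -
    have "continuous_on {0..} (\<lambda>u. exp (- c * u) *\<^sub>R (z + Iy y u))" by (intro continuous_intros Icont)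
    then show ?thesis unfolding Ph_def
      by (rule continuous_on_compose2[of "{0..}" "\<lambda>u. exp (- c * u) *\<^sub>R (z + Iy y u)" UNIV "\<lambda>t. max t 0"])
         (auto intro!: continuous_intros)
  qed
  have Gbd: "norm (Gy y s) \<le> norm (F 0) + L * exp (c * s) * norm y" for y s
  proof -
    have "norm (Gy y s) \<le> norm (F 0) + norm (Gy y s - F 0)" by (metis add.commute diff_add_cancel norm_triangle_ineq)
    also have "norm (Gy y s - F 0) \<le> L * norm (exp (c * s) *\<^sub>R apply_bcontfun y s)"
      unfolding Gy_def using lip[of "exp (c * s) *\<^sub>R apply_bcontfun y s" 0] by simp
    also have "\<dots> = L * exp (c * s) * norm (apply_bcontfun y s)" by simp
    also have "\<dots> \<le> L * exp (c * s) * norm y" using Lpos by (simp add: norm_bounded)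
    finally show ?thesis by simp
  qed
  have Ibd: "norm (Iy y u) \<le> (norm (F 0) * u + norm y * exp (c * u) / 2) - (norm (F 0) * 0 + norm y * exp (c * 0) / 2)"
    if u: "u \<ge> 0" for y u
  proof -
    have "norm (Iy y u - Iy y 0) \<le> (norm (F 0) * u + norm y * exp (c * u) / 2) - (norm (F 0) * 0 + norm y * exp (c * 0) / 2)"
    proof (rule ftc_bound[where f'="Gy y" and g="\<lambda>s. norm (F 0) + L * exp (c * s) * norm y"])
      show "0 \<le> u" by (rule u)
      fix x assume x: "x \<in> {0..u}"
      show "(Iy y has_vector_derivative Gy y x) (at x within {0..u})"
        by (rule has_vector_derivative_within_subset[OF Ider]) (use x in auto)
      show "((\<lambda>s. norm (F 0) * s + norm y * exp (c * s) / 2) has_real_derivative norm (F 0) + L * exp (c * x) * norm y) (at x within {0..u})"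
        by (auto intro!: derivative_eq_intros simp: c_def)
      show "norm (Gy y x) \<le> norm (F 0) + L * exp (c * x) * norm y" by (rule Gbd)
    qed
    then show ?thesis by (simp add: I0)
  qed
  have Phbd: "norm (Ph y t) \<le> norm z + norm (F 0) / c + norm y / 2" for y t
  proof -
    define u where "u = max t 0"
    have u: "u \<ge> 0" unfolding u_def by (rule max.cobounded2)
    define X where "X = exp (- c * u)"
    define E where "E = exp (c * u)"
    have XE: "X * E = 1" unfolding X_def E_def by (simp add: exp_add[symmetric])
    have X0: "0 < X" "X \<le> 1" unfolding X_def using cpos u by auto
    have "1 + c * u \<le> E" unfolding E_def by (rule exp_ge_add_one_self)
    then have "X * (c * u) \<le> X * E" using X0 by (simp add: mult_left_mono)
    then have Xu: "X * u * c \<le> 1" using XE by (simp add: algebra_simps)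
    have "norm (Ph y t) = X * norm (z + Iy y u)" by (simp add: Ph_def X_def u_def)
    also have "\<dots> \<le> X * (norm z + (norm (F 0) * u + norm y * (E - 1) / 2))"
    proof -
      have "norm (z + Iy y u) \<le> norm z + norm (Iy y u)" by (rule norm_triangle_ineq)
      also have "norm (Iy y u) \<le> norm (F 0) * u + norm y * (E - 1) / 2"
        using Ibd[OF u, of y] unfolding E_def by (simp add: field_simps)
      finally show ?thesis using X0 by (simp add: mult_left_mono)
    qed
    also have "\<dots> \<le> norm z + norm (F 0) / c + norm y / 2"
      using aux2[OF X0 XE Xu cpos, of "norm z" "norm (F 0)" "norm y"] by (simp add: add.assoc)
    finally show ?thesis .
  qed
  have in_bc: "Ph y \<in> bcontfun" for y
    by (rule bcontfun_normI[OF Phcont]) (rule Phbd)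
  define P where "P = (\<lambda>y. Bcontfun (Ph y))"
  have Papp: "apply_bcontfun (P y) = Ph y" for y
    unfolding P_def using in_bc by (simp add: Bcontfun_inverse)
  have contr: "dist (P y1) (P y2) \<le> 1/2 * dist y1 y2" for y1 y2
  proof (rule dist_bound)
    fix t :: real
    define u where "u = max t 0"
    have u: "u \<ge> 0" unfolding u_def by (rule max.cobounded2)
    define d where "d = dist y1 y2"
    have d0: "d \<ge> 0" by (simp add: d_def)
    have "norm ((Iy y1 u - Iy y2 u) - (Iy y1 0 - Iy y2 0)) \<le> d * exp (c * u) / 2 - d * exp (c * 0) / 2"
    proof (rule ftc_bound[where f'="\<lambda>s. Gy y1 s - Gy y2 s" and g="\<lambda>s. L * exp (c * s) * d"])
      show "0 \<le> u" by (rule u)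
      fix x assume x: "x \<in> {0..u}"
      show "((\<lambda>s. Iy y1 s - Iy y2 s) has_vector_derivative Gy y1 x - Gy y2 x) (at x within {0..u})"
        by (rule has_vector_derivative_within_subset[OF has_vector_derivative_diff[OF Ider Ider]]) (use x in auto)
      show "((\<lambda>s. d * exp (c * s) / 2) has_real_derivative L * exp (c * x) * d) (at x within {0..u})"
        by (auto intro!: derivative_eq_intros simp: c_def)
      have "norm (Gy y1 x - Gy y2 x) \<le> L * norm (exp (c * x) *\<^sub>R apply_bcontfun y1 x - exp (c * x) *\<^sub>R apply_bcontfun y2 x)"
        unfolding Gy_def by (rule lip)
      also have "\<dots> = L * exp (c * x) * dist (apply_bcontfun y1 x) (apply_bcontfun y2 x)"
        by (simp add: dist_norm scaleR_diff_right[symmetric])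
      also have "\<dots> \<le> L * exp (c * x) * d"
        unfolding d_def using Lpos by (simp add: dist_bounded)
      finally show "norm (Gy y1 x - Gy y2 x) \<le> L * exp (c * x) * d" .
    qed
    then have Ib: "norm (Iy y1 u - Iy y2 u) \<le> d * (exp (c * u) - 1) / 2" by (simp add: I0 field_simps)
    have "dist (apply_bcontfun (P y1) t) (apply_bcontfun (P y2) t) = exp (- c * u) * norm (Iy y1 u - Iy y2 u)"
      by (simp add: Papp Ph_def dist_norm u_def scaleR_diff_right[symmetric])
    also have "\<dots> \<le> exp (- c * u) * (d * (exp (c * u) - 1) / 2)"
      using Ib by (simp add: mult_left_mono)
    also have "\<dots> = d / 2 * (exp (- c * u) * exp (c * u)) - d / 2 * exp (- c * u)"
      by (simp add: field_simps)
    also have "\<dots> \<le> d / 2"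
      using d0 by (simp add: exp_add[symmetric])
    finally show "dist (apply_bcontfun (P y1) t) (apply_bcontfun (P y2) t) \<le> 1/2 * dist y1 y2"
      by (simp add: d_def)
  qed
  obtain y where y: "P y = y" using banach_fix_type[of "1/2" P] contr by auto
  define \<zeta> where "\<zeta> = (\<lambda>s. exp (c * s) *\<^sub>R apply_bcontfun y s)"
  have \<zeta>eq: "\<zeta> s = z + Iy y s" if s: "s \<ge> 0" for s
  proof -
    have "apply_bcontfun y s = Ph y s" using Papp[of y] y by simp
    also have "\<dots> = exp (- c * s) *\<^sub>R (z + Iy y s)" using s by (simp add: Ph_def)
    finally have "\<zeta> s = exp (c * s) *\<^sub>R exp (- c * s) *\<^sub>R (z + Iy y s)" by (simp add: \<zeta>_def)
    also have "\<dots> = z + Iy y s" by (simp add: exp_add[symmetric])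
    finally show ?thesis .
  qed
  have GyF: "Gy y s = F (\<zeta> s)" for s by (simp add: Gy_def \<zeta>_def)
  show ?thesis
  proof (intro exI conjI allI impI)
    show "\<zeta> 0 = z" using \<zeta>eq[of 0] by (simp add: I0)
    fix t :: real assume t: "0 \<le> t"
    have "((\<lambda>s. z + Iy y s) has_vector_derivative 0 + Gy y t) (at t within {0..})"
      by (rule has_vector_derivative_add[OF has_vector_derivative_const Ider[OF t]])
    then have "((\<lambda>s. z + Iy y s) has_vector_derivative F (\<zeta> t)) (at t within {0..})" by (simp add: GyF)
    then show "(\<zeta> has_vector_derivative F (\<zeta> t)) (at t within {0..})"
      by (rule has_vector_derivative_transform_within[where d=1]) (use t \<zeta>eq in auto)
  qed
qed


lemma scalar_conv:
  fixes w v :: "real \<Rightarrow> real"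
  assumes c: "c > 0"
    and d: "\<And>t. t \<ge> 0 \<Longrightarrow> (w has_real_derivative (- c * w t + v t)) (at t within {0..})"
    and v: "(v \<longlongrightarrow> l) at_top"
  shows "(w \<longlongrightarrow> l / c) at_top"
proof -
  define W where "W = (\<lambda>t. w t - l / c)"
  have est: "\<bar>W t\<bar> \<le> exp (c * t0) / exp (c * t) * \<bar>W t0\<bar> + \<epsilon> / c"
    if t0: "t0 \<ge> 0" and tt: "t \<ge> t0" and vb: "\<And>s. s \<ge> t0 \<Longrightarrow> \<bar>v s - l\<bar> \<le> \<epsilon>" for t t0 \<epsilon>
  proof -
    have "norm ((\<lambda>s. exp (c * s) * W s) t - (\<lambda>s. exp (c * s) * W s) t0) \<le> \<epsilon> * exp (c * t) / c - \<epsilon> * exp (c * t0) / c"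
    proof (rule ftc_bound[where f'="\<lambda>s. exp (c * s) * (v s - l)" and g = "\<lambda>s. \<epsilon> * exp (c * s)"])
      show "t0 \<le> t" by (rule tt)
      fix x assume x: "x \<in> {t0..t}"
      have "(w has_real_derivative (- c * w x + v x)) (at x within {t0..t})"
        by (rule has_field_derivative_subset[OF d]) (use x t0 in auto)
      note wd = this
      have ed: "((\<lambda>s. exp (c * s)) has_real_derivative exp (c * x) * c) (at x within {t0..t})"
        by (auto intro!: derivative_eq_intros)
      have D1: "((\<lambda>s. exp (c * s) * (w s - l / c)) has_real_derivative (exp (c * x) * c) * (w x - l / c) + (- c * w x + v x) * exp (c * x)) (at x within {t0..t})"
        using DERIV_mult[OF ed DERIV_diff[OF wd DERIV_const]] by simp
      have eq: "(exp (c * x) * c) * (w x - l / c) + (- c * w x + v x) * exp (c * x) = exp (c * x) * (v x - l)"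
        using c by (simp add: field_simps)
      have "((\<lambda>s. exp (c * s) * W s) has_real_derivative exp (c * x) * (v x - l)) (at x within {t0..t})"
        unfolding W_def eq[symmetric] by (rule D1)
      then show "((\<lambda>s. exp (c * s) * W s) has_vector_derivative exp (c * x) * (v x - l)) (at x within {t0..t})"
        by (simp add: has_real_derivative_iff_has_vector_derivative)
      show "((\<lambda>s. \<epsilon> * exp (c * s) / c) has_real_derivative \<epsilon> * exp (c * x)) (at x within {t0..t})"
        using c by (auto intro!: derivative_eq_intros)
      have "\<bar>v x - l\<bar> \<le> \<epsilon>" using vb x by auto
      then show "norm (exp (c * x) * (v x - l)) \<le> \<epsilon> * exp (c * x)"
        by (simp add: abs_mult mult.commute)
    qed
    then have n1: "\<bar>exp (c * t) * W t - exp (c * t0) * W t0\<bar> \<le> \<epsilon> * exp (c * t) / c - \<epsilon> * exp (c * t0) / c"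
      by simp
    have eps0: "\<epsilon> \<ge> 0" using vb[of t0] by auto
    have n2: "\<epsilon> * exp (c * t0) / c \<ge> 0" using eps0 c by simp
    have n3: "\<bar>exp (c * t) * W t\<bar> = exp (c * t) * \<bar>W t\<bar>" "\<bar>exp (c * t0) * W t0\<bar> = exp (c * t0) * \<bar>W t0\<bar>"
      by (simp_all add: abs_mult)
    have n4: "\<bar>exp (c * t) * W t\<bar> - \<bar>exp (c * t0) * W t0\<bar> \<le> \<bar>exp (c * t) * W t - exp (c * t0) * W t0\<bar>"
      by (rule abs_triangle_ineq2)
    have 1: "exp (c * t) * \<bar>W t\<bar> \<le> exp (c * t0) * \<bar>W t0\<bar> + \<epsilon> * exp (c * t) / c"
      using n1 n2 n3 n4 by linarith
    have E: "exp (c * t) > 0" by simp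
    have "\<bar>W t\<bar> \<le> (exp (c * t0) * \<bar>W t0\<bar> + \<epsilon> * exp (c * t) / c) / exp (c * t)"
      using 1 E by (simp add: pos_le_divide_eq mult.commute)
    also have "\<dots> = exp (c * t0) / exp (c * t) * \<bar>W t0\<bar> + \<epsilon> / c"
      using E by (simp add: field_simps)
    finally show ?thesis .
  qed
  have "(W \<longlongrightarrow> 0) at_top"
  proof (rule tendstoI)
    fix e :: real assume e: "e > 0"
    define \<epsilon> where "\<epsilon> = c * e / 4"
    have \<epsilon>: "\<epsilon> > 0" using c e by (simp add: \<epsilon>_def)
    have "\<forall>\<^sub>F t in at_top. dist (v t) l < \<epsilon>" using tendstoD[OF v \<epsilon>] .
    then obtain N1 where N1: "\<And>t. t \<ge> N1 \<Longrightarrow> \<bar>v t - l\<bar> < \<epsilon>"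
      by (auto simp: eventually_at_top_linorder dist_real_def)
    define t0 where "t0 = max N1 0"
    have t0: "t0 \<ge> 0" by (simp add: t0_def)
    have vb: "\<And>s. s \<ge> t0 \<Longrightarrow> \<bar>v s - l\<bar> \<le> \<epsilon>" using N1 by (force simp: t0_def)
    define K where "K = 2 * exp (c * t0) * \<bar>W t0\<bar> / e"
    have K0: "K \<ge> 0" using e by (simp add: K_def)
    show "\<forall>\<^sub>F t in at_top. dist (W t) 0 < e"
      unfolding eventually_at_top_linorder
    proof (intro exI allI impI)
      fix t assume t: "t \<ge> max t0 (K / c)"
      then have tt: "t \<ge> t0" and tK: "c * t \<ge> K" using c by (auto simp: field_simps)
      have "exp (c * t) \<ge> 1 + c * t" by (rule exp_ge_add_one_self)
      then have Kl: "K < exp (c * t)" using tK by linarith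
      have "exp (c * t0) * \<bar>W t0\<bar> = K * e / 2" using e by (simp add: K_def)
      also have "\<dots> \<le> exp (c * t) * e / 2" using Kl e by (simp add: mult_right_mono)
      finally have "exp (c * t0) / exp (c * t) * \<bar>W t0\<bar> \<le> e / 2"
        by (simp add: field_simps)
      moreover have "\<epsilon> / c = e / 4" using c by (simp add: \<epsilon>_def)
      ultimately have "\<bar>W t\<bar> \<le> e / 2 + e / 4" using est[OF t0 tt vb] by linarith
      then show "dist (W t) 0 < e" using e by simp
    qed
  qed
  then have "((\<lambda>t. W t + l / c) \<longlongrightarrow> 0 + l / c) at_top" by (intro tendsto_intros)
  then show ?thesis by (simp add: W_def)
qed

lemma matvec_A:
  assumes i: "i < r"
  shows "matvec r (A_gamma r \<gamma>) v i = - \<gamma> i * v i + (if Suc i < r then v (Suc i) else 0)"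
proof -
  have "matvec r (A_gamma r \<gamma>) v i = (\<Sum>j<r. (if j = i then - \<gamma> i * v j else 0) + (if j = Suc i then v j else 0))"
    unfolding matvec_def A_gamma_def by (rule sum.cong) (use i in auto)
  also have "\<dots> = - \<gamma> i * v i + (if Suc i < r then v (Suc i) else 0)"
    using i by (simp add: sum.distrib)
  finally show ?thesis .
qed

lemma Gamma_eq:
  assumes r: "r \<ge> 1" and g: "\<forall>i<r. \<gamma> i > 0"
  shows "\<forall>i<r. - \<gamma> i * Gamma_vec r \<gamma> i + (if Suc i < r then Gamma_vec r \<gamma> (Suc i) else 0) + B_vec r i = 0"
proof -
  define Q where "Q = (\<lambda>v. (\<forall>i<r. matvec r (A_gamma r \<gamma>) v i + B_vec r i = 0) \<and> (\<forall>i\<ge>r. v i = (0::real)))"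
  have Qiff: "Q v \<longleftrightarrow> (\<forall>i<r. - \<gamma> i * v i + (if Suc i < r then v (Suc i) else 0) + B_vec r i = 0) \<and> (\<forall>i\<ge>r. v i = 0)" for v
    unfolding Q_def by (simp add: matvec_A)
  define v0 where "v0 = (\<lambda>i. if i < r then (\<Prod>j\<in>{i..<r}. 1 / \<gamma> j) else 0)"
  have "Q v0"
    unfolding Qiff
  proof (intro conjI allI impI)
    fix i assume i: "i < r"
    have gi: "\<gamma> i > 0" using g i by auto
    show "- \<gamma> i * v0 i + (if Suc i < r then v0 (Suc i) else 0) + B_vec r i = 0"
    proof (cases "Suc i < r")
      case True
      then show ?thesis using i gi
        by (simp add: v0_def B_vec_def prod.atLeast_Suc_lessThan[OF i])
    next
      case False
      then have ir: "i = r - 1" using i by auto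
      have "{i..<r} = {i}" using i False by auto
      then show ?thesis using i gi False ir by (simp add: v0_def B_vec_def)
    qed
  next
    fix i assume "r \<le> i" then show "v0 i = 0" by (simp add: v0_def)
  qed
  moreover have "v = v'" if "Q v" "Q v'" for v v'
  proof -
    have eqs: "\<forall>i<r. - \<gamma> i * v i + (if Suc i < r then v (Suc i) else 0) + B_vec r i = 0"
              "\<forall>i<r. - \<gamma> i * v' i + (if Suc i < r then v' (Suc i) else 0) + B_vec r i = 0"
      "\<forall>i\<ge>r. v i = 0" "\<forall>i\<ge>r. v' i = 0" using that unfolding Qiff by auto
    have allk: "\<forall>k. k < r \<longrightarrow> v (r - 1 - k) = v' (r - 1 - k)"
    proof (rule allI, induct_tac k)
      show "0 < r \<longrightarrow> v (r - 1 - 0) = v' (r - 1 - 0)"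
      proof
        assume "0 < r"
        have i: "r - 1 < r" "\<not> Suc (r - 1) < r" using r by auto
        have gi: "\<gamma> (r - 1) > 0" using g i by auto
        have "- \<gamma> (r - 1) * v (r - 1) + 1 = 0" "- \<gamma> (r - 1) * v' (r - 1) + 1 = 0"
          using eqs(1)[rule_format, OF i(1)] eqs(2)[rule_format, OF i(1)] i(2) by (simp_all add: B_vec_def)
        then have "\<gamma> (r - 1) * v (r - 1) = \<gamma> (r - 1) * v' (r - 1)" by simp
        then show "v (r - 1 - 0) = v' (r - 1 - 0)" using gi by simp
      qed
    next
      fix k assume IH: "k < r \<longrightarrow> v (r - 1 - k) = v' (r - 1 - k)"
      show "Suc k < r \<longrightarrow> v (r - 1 - Suc k) = v' (r - 1 - Suc k)"
      proof
        assume k: "Suc k < r"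
        define i where "i = r - 1 - Suc k"
        have i: "i < r" "Suc i < r" "Suc i = r - 1 - k" "i \<noteq> r - 1" using k by (auto simp: i_def)
        have gi: "\<gamma> i > 0" using g i by auto
        have "- \<gamma> i * v i + v (Suc i) = 0" "- \<gamma> i * v' i + v' (Suc i) = 0"
          using eqs(1)[rule_format, OF i(1)] eqs(2)[rule_format, OF i(1)] i by (simp_all add: B_vec_def)
        moreover have "v (Suc i) = v' (Suc i)" using IH k i by auto
        ultimately have "\<gamma> i * v i = \<gamma> i * v' i" by simp
        then have "v i = v' i" using gi by simp
        then show "v (r - 1 - Suc k) = v' (r - 1 - Suc k)" by (simp add: i_def)
      qed
    qed
    then have vi: "v i = v' i" if "i < r" for i
    proof -
      have "r - 1 - (r - 1 - i) = i" "r - 1 - i < r" using that by arith+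
      then show ?thesis using spec[OF allk, of "r - 1 - i"] by simp
    qed
    show "v = v'"
    proof (rule ext)
      fix i show "v i = v' i" using eqs(3,4) vi by (cases "i < r") auto
    qed
  qed
  ultimately have "\<exists>!v. Q v" by blast
  then have "Q (Gamma_vec r \<gamma>)" unfolding Gamma_vec_def Q_def[symmetric] by (rule theI')
  then show ?thesis unfolding Qiff by blast
qed


lemma aux3: "(Q::real) \<noteq> 0 \<Longrightarrow> Q * (e / (2 * Q)) = e / 2"
  by (simp add: field_simps)

theorem theorem5:
  fixes r :: nat and \<gamma> :: "nat \<Rightarrow> real" and \<mu>e :: real
    and q :: "'e::euclidean_space \<Rightarrow> (nat \<Rightarrow> real) \<Rightarrow> 'e"
    and \<phi> :: "real \<Rightarrow> nat \<Rightarrow> real" and \<eta> :: "real \<Rightarrow> 'e" and \<eta>e :: 'e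
  assumes r_pos: "r \<ge> 1"
    and gamma_pos: "\<forall>i<r. \<gamma> i > 0"
    and q_lip: "lipschitz_cbf r q"
    and x0_in_S: "\<forall>i<r. \<phi> 0 i \<ge> 0"
    and mu_nonneg: "\<mu>e \<ge> 0"
    and min_phase: "glob_exp_stable_eq (\<lambda>z. q z (scale_r \<mu>e (Gamma_vec r \<gamma>))) \<eta>e"
    and phi_ode: "\<forall>t\<ge>0. \<forall>i<r. ((\<lambda>s. \<phi> s i) has_real_derivative
          (matvec r (A_gamma r \<gamma>) (\<phi> t) i + B_vec r i * \<mu>e)) (at t within {0..})"
    and eta_ode: "\<forall>t\<ge>0. (\<eta> has_vector_derivative q (\<eta> t) (\<phi> t)) (at t within {0..})"
  shows "(\<forall>i<r. ((\<lambda>t. \<phi> t i) \<longlongrightarrow> \<mu>e * Gamma_vec r \<gamma> i) at_top)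
         \<and> (\<eta> \<longlongrightarrow> \<eta>e) at_top"
proof -
  define \<Gamma> where "\<Gamma> = Gamma_vec r \<gamma>"
  have Geq: "\<forall>i<r. - \<gamma> i * \<Gamma> i + (if Suc i < r then \<Gamma> (Suc i) else 0) + B_vec r i = 0"
    unfolding \<Gamma>_def by (rule Gamma_eq[OF r_pos gamma_pos])
  have step: "((\<lambda>t. \<phi> t i) \<longlongrightarrow> l / \<gamma> i) at_top"
    if i: "i < r" and lim: "((\<lambda>t. (if Suc i < r then \<phi> t (Suc i) else 0) + B_vec r i * \<mu>e) \<longlongrightarrow> l) at_top" for i l
  proof (rule scalar_conv[OF gamma_pos[rule_format, OF i] _ lim])
    fix t :: real assume t: "t \<ge> 0"
    have "matvec r (A_gamma r \<gamma>) (\<phi> t) i + B_vec r i * \<mu>e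
       = - \<gamma> i * \<phi> t i + ((if Suc i < r then \<phi> t (Suc i) else 0) + B_vec r i * \<mu>e)"
      using matvec_A[OF i] by simp
    then show "((\<lambda>s. \<phi> s i) has_real_derivative - \<gamma> i * \<phi> t i + ((if Suc i < r then \<phi> t (Suc i) else 0) + B_vec r i * \<mu>e)) (at t within {0..})"
      using phi_ode t i by metis
  qed
  have allk: "\<forall>k. k < r \<longrightarrow> ((\<lambda>t. \<phi> t (r - 1 - k)) \<longlongrightarrow> \<mu>e * \<Gamma> (r - 1 - k)) at_top"
  proof (rule allI, induct_tac k)
    show "0 < r \<longrightarrow> ((\<lambda>t. \<phi> t (r - 1 - 0)) \<longlongrightarrow> \<mu>e * \<Gamma> (r - 1 - 0)) at_top"
    proof
      assume "0 < r"
      have i: "r - 1 < r" "\<not> Suc (r - 1) < r" "B_vec r (r - 1) = 1" using r_pos by (auto simp: B_vec_def)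
      have gi: "\<gamma> (r - 1) > 0" using gamma_pos i by auto
      have "- \<gamma> (r - 1) * \<Gamma> (r - 1) + 1 = 0" using Geq[rule_format, OF i(1)] i by simp
      then have G: "\<mu>e * \<Gamma> (r - 1) = \<mu>e / \<gamma> (r - 1)" using gi by (simp add: field_simps)
      have "((\<lambda>t. (if Suc (r - 1) < r then \<phi> t (Suc (r - 1)) else 0) + B_vec r (r - 1) * \<mu>e) \<longlongrightarrow> \<mu>e) at_top"
        using i by simp
      from step[OF i(1) this] show "((\<lambda>t. \<phi> t (r - 1 - 0)) \<longlongrightarrow> \<mu>e * \<Gamma> (r - 1 - 0)) at_top"
        using G by simp
    qed
  next
    fix k assume IH: "k < r \<longrightarrow> ((\<lambda>t. \<phi> t (r - 1 - k)) \<longlongrightarrow> \<mu>e * \<Gamma> (r - 1 - k)) at_top"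
    show "Suc k < r \<longrightarrow> ((\<lambda>t. \<phi> t (r - 1 - Suc k)) \<longlongrightarrow> \<mu>e * \<Gamma> (r - 1 - Suc k)) at_top"
    proof
      assume k: "Suc k < r"
      define i where "i = r - 1 - Suc k"
      have i: "i < r" "Suc i < r" "Suc i = r - 1 - k" "i \<noteq> r - 1" using k by (auto simp: i_def)
      have gi: "\<gamma> i > 0" using gamma_pos i by auto
      have B0: "B_vec r i = 0" using i by (simp add: B_vec_def)
      have "- \<gamma> i * \<Gamma> i + \<Gamma> (Suc i) = 0" using Geq[rule_format, OF i(1)] i B0 by simp
      then have G: "\<mu>e * \<Gamma> i = \<mu>e * \<Gamma> (Suc i) / \<gamma> i" using gi by (simp add: field_simps)
      have "((\<lambda>t. \<phi> t (Suc i)) \<longlongrightarrow> \<mu>e * \<Gamma> (Suc i)) at_top" using IH k i by simp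
      then have "((\<lambda>t. (if Suc i < r then \<phi> t (Suc i) else 0) + B_vec r i * \<mu>e) \<longlongrightarrow> \<mu>e * \<Gamma> (Suc i)) at_top"
        using i B0 by simp
      from step[OF i(1) this] show "((\<lambda>t. \<phi> t (r - 1 - Suc k)) \<longlongrightarrow> \<mu>e * \<Gamma> (r - 1 - Suc k)) at_top"
        using G by (simp add: i_def)
    qed
  qed
  have phi_lim: "((\<lambda>t. \<phi> t i) \<longlongrightarrow> \<mu>e * \<Gamma> i) at_top" if i: "i < r" for i
  proof -
    have "r - 1 - (r - 1 - i) = i" "r - 1 - i < r" using i by arith+
    then show ?thesis using spec[OF allk, of "r - 1 - i"] by simp
  qed
  show ?thesis
  proof
    show "\<forall>i<r. ((\<lambda>t. \<phi> t i) \<longlongrightarrow> \<mu>e * Gamma_vec r \<gamma> i) at_top" using phi_lim by (simp add: \<Gamma>_def)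
  next
    show "(\<eta> \<longlongrightarrow> \<eta>e) at_top"
    proof -
      define \<Phi> where "\<Phi> = scale_r \<mu>e \<Gamma>"
      obtain L0 where L0: "\<And>a a' b b'. norm (q a b - q a' b') \<le> L0 * (norm (a - a') + dist_r r b b')"
        using q_lip unfolding lipschitz_cbf_def by blast
      define L where "L = max L0 1"
      have Lpos: "L > 0" by (simp add: L_def)
      have dr0: "dist_r r b b' \<ge> 0" for b b' unfolding dist_r_def by (intro real_sqrt_ge_zero sum_nonneg) simp
      have qL: "norm (q a b - q a' b') \<le> L * (norm (a - a') + dist_r r b b')" for a a' b b'
      proof -
        have "L0 * (norm (a - a') + dist_r r b b') \<le> L * (norm (a - a') + dist_r r b b')"
          by (rule mult_right_mono) (use dr0[of b b'] in \<open>auto simp: L_def\<close>)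
        then show ?thesis using L0[of a b a' b'] by linarith
      qed
      define F where "F = (\<lambda>z. q z \<Phi>)"
      have drr: "dist_r r b b = 0" for b by (simp add: dist_r_def)
      have Flip: "norm (F x - F y) \<le> L * norm (x - y)" for x y
        using qL[where a=x and a'=y and b=\<Phi> and b'=\<Phi>] by (simp add: F_def drr)
      define \<delta> where "\<delta> = (\<lambda>t. dist_r r (\<phi> t) \<Phi>)"
      have \<delta>0: "\<delta> t \<ge> 0" for t by (simp add: \<delta>_def dr0)
      have \<delta>lim: "(\<delta> \<longlongrightarrow> 0) at_top"
      proof -
        have "((\<lambda>t. sqrt (\<Sum>i<r. (\<phi> t i - \<Phi> i)^2)) \<longlongrightarrow> sqrt (\<Sum>i<r. (\<mu>e * \<Gamma> i - \<Phi> i)^2)) at_top"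
          by (intro tendsto_intros phi_lim) simp
        then show ?thesis by (simp add: \<delta>_def dist_r_def \<Phi>_def scale_r_def)
      qed
      have "F \<eta>e = 0" and "\<exists>M k. M > 0 \<and> k > 0 \<and>
        (\<forall>\<zeta>. (\<forall>t\<ge>0. (\<zeta> has_vector_derivative F (\<zeta> t)) (at t within {0..})) \<longrightarrow>
             (\<forall>t\<ge>0. norm (\<zeta> t - \<eta>e) \<le> M * exp (- k * t) * norm (\<zeta> 0 - \<eta>e)))"
        using min_phase unfolding glob_exp_stable_eq_def F_def \<Phi>_def \<Gamma>_def by auto
      then obtain M k where M: "M > 0" and k: "k > 0" and GES:
        "\<And>\<zeta>. (\<forall>t\<ge>0. (\<zeta> has_vector_derivative F (\<zeta> t)) (at t within {0..})) \<Longrightarrow>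
             (\<forall>t\<ge>0. norm (\<zeta> t - \<eta>e) \<le> M * exp (- k * t) * norm (\<zeta> 0 - \<eta>e))"
        by blast
      define T where "T = max 1 (ln (2 * M) / k)"
      have Tpos: "T > 0" by (simp add: T_def)
      have MT: "M * exp (- k * T) \<le> 1 / 2"
      proof -
        have "ln (2 * M) / k \<le> T" by (simp add: T_def)
        then have "ln (2 * M) \<le> k * T" using k by (simp add: divide_le_eq mult.commute)
        then have "exp (- k * T) \<le> exp (- ln (2 * M))" by simp
        also have "\<dots> = 1 / (2 * M)" using M by (simp add: exp_minus inverse_eq_divide)
        finally have ex: "exp (- k * T) \<le> 1 / (2 * M)" .
        have "M * exp (- k * T) \<le> M * (1 / (2 * M))" using ex M by (intro mult_left_mono) auto
        then show ?thesis using M by simp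
      qed
      define K where "K = 2 * L * T * exp (2 * L * T)"
      have Kpos: "K > 0" using Lpos Tpos by (simp add: K_def)
      have cmp: "norm (\<eta> (t0 + s) - \<eta>e) \<le> M * exp (- k * s) * norm (\<eta> t0 - \<eta>e) + K * D"
        if t0: "t0 \<ge> 0" and D: "D \<ge> 0" and \<delta>D: "\<And>t. t \<ge> t0 \<Longrightarrow> \<delta> t \<le> D" and s: "s \<in> {0..T}" for t0 D s
      proof -
        obtain \<zeta> where \<zeta>0: "\<zeta> 0 = \<eta> t0" and \<zeta>d: "\<forall>t\<ge>0. (\<zeta> has_vector_derivative F (\<zeta> t)) (at t within {0..})"
          using ode_exists[OF Flip Lpos, of "\<eta> t0"] by blast
        have ges: "norm (\<zeta> s - \<eta>e) \<le> M * exp (- k * s) * norm (\<eta> t0 - \<eta>e)"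
          using GES[OF \<zeta>d] s \<zeta>0 by auto
        define e where "e = (\<lambda>s. \<eta> (t0 + s) - \<zeta> s)"
        have de: "(e has_vector_derivative (q (\<eta> (t0 + s')) (\<phi> (t0 + s')) - F (\<zeta> s'))) (at s' within {0..T})"
          if s': "s' \<in> {0..T}" for s'
        proof -
          have "((\<lambda>s. \<eta> (t0 + s)) has_vector_derivative q (\<eta> (t0 + s')) (\<phi> (t0 + s'))) (at s' within {0..})"
            by (rule shift_deriv[OF _ t0]) (use eta_ode t0 s' in auto)
          from has_vector_derivative_diff[OF this \<zeta>d[rule_format, of s']]
          have "(e has_vector_derivative (q (\<eta> (t0 + s')) (\<phi> (t0 + s')) - F (\<zeta> s'))) (at s' within {0..})"
            using s' by (simp add: e_def)
          then show ?thesis by (rule has_vector_derivative_within_subset) auto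
        qed
        have bd: "norm (q (\<eta> (t0 + s')) (\<phi> (t0 + s')) - F (\<zeta> s')) \<le> L * norm (e s') + L * D"
          if s': "s' \<in> {0..T}" for s'
        proof -
          have "norm (q (\<eta> (t0 + s')) (\<phi> (t0 + s')) - F (\<zeta> s')) \<le> L * (norm (e s') + \<delta> (t0 + s'))"
            using qL[where a="\<eta> (t0 + s')" and a'="\<zeta> s'" and b="\<phi> (t0 + s')" and b'=\<Phi>] by (simp add: F_def e_def \<delta>_def)
          also have "\<dots> \<le> L * (norm (e s') + D)"
            using \<delta>D[of "t0 + s'"] s' Lpos by (intro mult_left_mono) auto
          finally show ?thesis by (simp add: algebra_simps)
        qed
        have e0: "e 0 = 0" by (simp add: e_def \<zeta>0)
        have LD: "L * D \<ge> 0" using Lpos D by simp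
        have "norm (e s) \<le> 2 * (L * D) * T * exp (2 * L * T)"
          using gronwall_max[OF less_imp_le[OF Tpos] Lpos LD e0 de bd] s by blast
        then have eb: "norm (e s) \<le> K * D" by (simp add: K_def algebra_simps)
        have "norm (\<eta> (t0 + s) - \<eta>e) \<le> norm (\<zeta> s - \<eta>e) + norm (e s)"
          unfolding e_def by (rule order_trans[OF _ norm_triangle_ineq]) (simp add: algebra_simps)
        then show ?thesis using ges eb by linarith
      qed
      show ?thesis
      proof (rule tendstoI)
        fix \<epsilon> :: real assume \<epsilon>: "\<epsilon> > 0"
        define \<epsilon>1 where "\<epsilon>1 = \<epsilon> / (2 * ((3 * M + 1) * K))"
        have \<epsilon>1: "\<epsilon>1 > 0" using \<epsilon> M Kpos by (simp add: \<epsilon>1_def)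
        have "\<forall>\<^sub>F t in at_top. dist (\<delta> t) 0 < \<epsilon>1" using tendstoD[OF \<delta>lim \<epsilon>1] .
        then obtain t1 where t1': "\<And>t. t \<ge> t1 \<Longrightarrow> \<bar>\<delta> t\<bar> < \<epsilon>1"
          by (auto simp: eventually_at_top_linorder dist_real_def)
        have t1: "\<And>t. t \<ge> t1 \<Longrightarrow> \<delta> t < \<epsilon>1" using t1' abs_ge_self order_le_less_trans by blast
        define t2 where "t2 = max t1 0"
        have t2: "t2 \<ge> 0" by (simp add: t2_def)
        have \<delta>b: "\<delta> t \<le> \<epsilon>1" if "x \<ge> 0" "t \<ge> t2 + x" for x t
        proof -
          have "t2 \<ge> t1" by (simp add: t2_def)
          then have "t \<ge> t1" using that by linarith
          then show ?thesis using t1 less_imp_le by blast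
        qed
        define a where "a = (\<lambda>n::nat. norm (\<eta> (t2 + real n * T) - \<eta>e))"
        have a0: "a n \<ge> 0" for n by (simp add: a_def)
        have rec: "a (Suc n) \<le> a n / 2 + K * \<epsilon>1" for n
        proof -
          have nT: "real n * T \<ge> 0" using Tpos by simp
          have "a (Suc n) = norm (\<eta> ((t2 + real n * T) + T) - \<eta>e)" by (simp add: a_def algebra_simps)
          also have "\<dots> \<le> M * exp (- k * T) * a n + K * \<epsilon>1"
            unfolding a_def
            by (rule cmp) (use t2 nT \<epsilon>1 \<delta>b[OF nT] Tpos in auto)
          also have "M * exp (- k * T) * a n \<le> 1 / 2 * a n"
            by (rule mult_right_mono[OF MT a0])
          finally show ?thesis by simp
        qed
        have an: "a n \<le> a 0 / 2 ^ n + 2 * K * \<epsilon>1" for n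
        proof (induct n)
          case 0 then show ?case using Kpos \<epsilon>1 by simp
        next
          case (Suc n)
          have "a (Suc n) \<le> a n / 2 + K * \<epsilon>1" by (rule rec)
          also have "\<dots> \<le> (a 0 / 2 ^ n + 2 * K * \<epsilon>1) / 2 + K * \<epsilon>1" using Suc by simp
          also have "\<dots> = a 0 / 2 ^ Suc n + 2 * K * \<epsilon>1" by simp
          finally show ?case .
        qed
        obtain N where N: "a 0 / (K * \<epsilon>1) < 2 ^ N" using real_arch_pow[of 2 "a 0 / (K * \<epsilon>1)"] by auto
        have aN: "a n \<le> 3 * K * \<epsilon>1" if n: "n \<ge> N" for n
        proof -
          have "a 0 < K * \<epsilon>1 * 2 ^ N" using N Kpos \<epsilon>1 by (simp add: divide_less_eq mult.commute)
          also have "\<dots> \<le> K * \<epsilon>1 * 2 ^ n" using n Kpos \<epsilon>1 by (simp add: power_increasing)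
          finally have "a 0 / 2 ^ n \<le> K * \<epsilon>1" by (simp add: divide_le_eq mult.commute)
          then show ?thesis using an[of n] by simp
        qed
        show "\<forall>\<^sub>F t in at_top. dist (\<eta> t) \<eta>e < \<epsilon>"
          unfolding eventually_at_top_linorder
        proof (intro exI allI impI)
          fix t assume t: "t \<ge> t2 + real N * T"
          define x where "x = (t - t2) / T"
          have xN: "x \<ge> real N" using t Tpos by (simp add: x_def field_simps)
          define n where "n = nat \<lfloor>x\<rfloor>"
          have fl0: "\<lfloor>x\<rfloor> \<ge> 0" using xN by simp
          have nx: "real n \<le> x" "x < real n + 1" using fl0 by (simp_all add: n_def)
          have nN: "n \<ge> N" using xN by (simp add: n_def le_nat_floor)
          define s where "s = t - t2 - real n * T"
          have s: "s \<in> {0..T}"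
          proof -
            have "real n * T \<le> x * T" "x * T < (real n + 1) * T" using nx Tpos by (simp_all add: mult_right_mono)
            moreover have "x * T = t - t2" using Tpos by (simp add: x_def)
            ultimately show ?thesis by (simp add: s_def algebra_simps)
          qed
          have nT: "real n * T \<ge> 0" using Tpos by simp
          have "norm (\<eta> t - \<eta>e) = norm (\<eta> ((t2 + real n * T) + s) - \<eta>e)" by (simp add: s_def)
          also have "\<dots> \<le> M * exp (- k * s) * a n + K * \<epsilon>1"
            unfolding a_def by (rule cmp) (use t2 nT \<epsilon>1 \<delta>b[OF nT] s in auto)
          also have "M * exp (- k * s) * a n \<le> M * 1 * (3 * K * \<epsilon>1)"
          proof (rule mult_mono)
            show "M * exp (- k * s) \<le> M * 1" using M k s by simp
            show "a n \<le> 3 * K * \<epsilon>1" using aN[OF nN] .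
          qed (use M a0 in auto)
          finally have "norm (\<eta> t - \<eta>e) \<le> (3 * M + 1) * K * \<epsilon>1" by (simp add: algebra_simps)
          also have "\<dots> = \<epsilon> / 2" unfolding \<epsilon>1_def by (rule aux3) (use M Kpos in simp)
          finally show "dist (\<eta> t) \<eta>e < \<epsilon>" using \<epsilon> by (simp add: dist_norm)
        qed
      qed
    qed
  qed
qed

thm_deps theorem5

end
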